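(* Let $\sigma=(a_1,\ldots,a_s)$ be a partition of $r$ with $a_1\ge\cdots\ge a_s$, let $H=H(n,r,q\mid\sigma)$, and let $M$ be a maximum matching in $H$. Then there is a matching $M_c$ in $H$ with $|M_c|=|M|$ (hence also maximum) such that: (1) for every edge $E\in M_c$ and every class $V_i$ with $E\cap V_i\neq\emptyset$, the vertices of $E\cap V_i$ are consecutive in $V_i$; and (2) in each class $V_i$, the vertices not covered by $M_c$ are consecutive and lie at the top or at the bottom of $V_i$.
   Context: A $\sigma$-hypergraph $H=H(n,r,q\mid\sigma)$, for a partition $\sigma$ of $r$, is the $r$-uniform hypergraph whose vertex set is the disjoint union of $n$ classes $V_1,\ldots,V_n$, each of size $q$; an $r$-subset $K$ of vertices is an edge iff the multiset of non-zero values $|K\cap V_i|$ equals $\sigma$. The vertices of each class are ordered $V_i=\{v_{1,i},v_{2,i},\ldots,v_{q,i}\}$; a set of vertices of $V_i$ is consecutive if it is of the form $\{v_{j,i},v_{j+1,i},\ldots,v_{j+m,i}\}$; the top $k$ vertices of $V_i$ are $v_{1,i},\ldots,v_{k,i}$ and the bottom $k$ vertices are $v_{q-k+1,i},\ldots,v_{q,i}$. A matching is a set of pairwise vertex-disjoint edges; a maximum matching is one of largest size. *)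

theory Defs
  imports Main "HOL-Library.Multiset"
begin

text \<open>Vertex v_{j,i} (the j-th vertex of class V_i) is the pair (j, i),
  with 1 \<le> j \<le> q and 1 \<le> i \<le> n.\<close>

definition cls :: "nat \<Rightarrow> nat \<Rightarrow> (nat \<times> nat) set" where
  "cls q i = {(j, i) | j. 1 \<le> j \<and> j \<le> q}"

definition verts :: "nat \<Rightarrow> nat \<Rightarrow> (nat \<times> nat) set" where
  "verts n q = (\<Union>i\<in>{1..n}. cls q i)"

definition is_partition :: "nat multiset \<Rightarrow> nat \<Rightarrow> bool" where
  "is_partition \<sigma> r \<longleftrightarrow> 0 \<notin># \<sigma> \<and> sum_mset \<sigma> = r"

definition sigma_edge :: "nat \<Rightarrow> nat \<Rightarrow> nat \<Rightarrow> nat multiset \<Rightarrow> (nat \<times> nat) set \<Rightarrow> bool" where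
  "sigma_edge n r q \<sigma> K \<longleftrightarrow> K \<subseteq> verts n q \<and> card K = r \<and>
     filter_mset (\<lambda>x. x \<noteq> 0) (image_mset (\<lambda>i. card (K \<inter> cls q i)) (mset_set {1..n})) = \<sigma>"

definition is_matching :: "nat \<Rightarrow> nat \<Rightarrow> nat \<Rightarrow> nat multiset \<Rightarrow> (nat \<times> nat) set set \<Rightarrow> bool" where
  "is_matching n r q \<sigma> M \<longleftrightarrow> (\<forall>E\<in>M. sigma_edge n r q \<sigma> E) \<and>
     (\<forall>E\<in>M. \<forall>F\<in>M. E \<noteq> F \<longrightarrow> E \<inter> F = {})"

definition is_max_matching :: "nat \<Rightarrow> nat \<Rightarrow> nat \<Rightarrow> nat multiset \<Rightarrow> (nat \<times> nat) set set \<Rightarrow> bool" where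
  "is_max_matching n r q \<sigma> M \<longleftrightarrow> is_matching n r q \<sigma> M \<and>
     (\<forall>M'. is_matching n r q \<sigma> M' \<longrightarrow> card M' \<le> card M)"

definition consecutive :: "nat \<Rightarrow> nat \<Rightarrow> (nat \<times> nat) set \<Rightarrow> bool" where
  "consecutive q i S \<longleftrightarrow> (\<exists>j m. 1 \<le> j \<and> j + m \<le> q \<and> S = {(k, i) | k. j \<le> k \<and> k \<le> j + m})"

definition top_k :: "nat \<Rightarrow> nat \<Rightarrow> nat \<Rightarrow> (nat \<times> nat) set" where
  "top_k q i k = {(j, i) | j. 1 \<le> j \<and> j \<le> k}"

definition bottom_k :: "nat \<Rightarrow> nat \<Rightarrow> nat \<Rightarrow> (nat \<times> nat) set" where
  "bottom_k q i k = {(j, i) | j. q - k + 1 \<le> j \<and> j \<le> q}"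

end

theory Submission
  imports Defs
begin

definition off :: "(nat \<times> nat) set list \<Rightarrow> nat \<Rightarrow> nat \<Rightarrow> nat \<Rightarrow> nat" where
  "off es q i t = (\<Sum>u<t. card (es!u \<inter> cls q i))"

definition newE :: "(nat \<times> nat) set list \<Rightarrow> nat \<Rightarrow> nat \<Rightarrow> nat \<Rightarrow> (nat \<times> nat) set" where
  "newE es q n t = {(j,i) | j i. i \<in> {1..n} \<and> off es q i t < j \<and> j \<le> off es q i (Suc t)}"

lemma cls_eq: "cls q i = (\<lambda>j. (j,i)) ` {1..q}"
  unfolding cls_def by auto

lemma card_cls: "card (cls q i) = q"
  unfolding cls_eq by (subst card_image) (auto simp: inj_on_def)

lemma finite_cls: "finite (cls q i)"
  unfolding cls_eq by auto

lemma finite_verts: "finite (verts n q)"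
  unfolding verts_def using finite_cls by auto

lemma off_Suc: "off es q i (Suc t) = off es q i t + card (es!t \<inter> cls q i)"
  unfolding off_def by simp

lemma off_mono: "t \<le> t' \<Longrightarrow> off es q i t \<le> off es q i t'"
  unfolding off_def by (rule sum_mono2) auto

lemma off_le_q:
  assumes "distinct es" "\<forall>E\<in>set es. \<forall>F\<in>set es. E \<noteq> F \<longrightarrow> E \<inter> F = {}"
  shows "off es q i (length es) \<le> q"
proof -
  have "off es q i (length es) = card (\<Union>u<length es. es!u \<inter> cls q i)"
    unfolding off_def
  proof (rule card_UN_disjoint[symmetric])
    show "finite {..<length es}" by simp
    show "\<forall>u\<in>{..<length es}. finite (es ! u \<inter> cls q i)" using finite_cls by auto
    show "\<forall>u\<in>{..<length es}. \<forall>v\<in>{..<length es}. u \<noteq> v \<longrightarrow> es ! u \<inter> cls q i \<inter> (es ! v \<inter> cls q i) = {}"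
    proof (intro ballI impI)
      fix u v assume "u \<in> {..<length es}" "v \<in> {..<length es}" "u \<noteq> v"
      then have "es!u \<noteq> es!v" "es!u \<in> set es" "es!v \<in> set es"
        using assms(1) nth_eq_iff_index_eq by auto
      then show "es ! u \<inter> cls q i \<inter> (es ! v \<inter> cls q i) = {}" using assms(2) by blast
    qed
  qed
  also have "\<dots> \<le> card (cls q i)"
    by (rule card_mono[OF finite_cls]) auto
  finally show ?thesis by (simp add: card_cls)
qed

lemma mem_newE: "(j,i) \<in> newE es q n t \<longleftrightarrow> i \<in> {1..n} \<and> off es q i t < j \<and> j \<le> off es q i (Suc t)"
  by (simp add: newE_def)

lemma mem_union_newE:
  "(j,i) \<in> (\<Union>t<p. newE es q n t) \<longleftrightarrow> i \<in> {1..n} \<and> 0 < j \<and> j \<le> off es q i p"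
proof (induction p)
  case 0 then show ?case by (auto simp: off_def)
next
  case (Suc p)
  have m: "off es q i p \<le> off es q i (Suc p)" using off_mono by auto
  have "(j,i) \<in> (\<Union>t<Suc p. newE es q n t) \<longleftrightarrow> (j,i) \<in> (\<Union>t<p. newE es q n t) \<or> (j,i) \<in> newE es q n p"
    by (auto simp: lessThan_Suc)
  also have "\<dots> \<longleftrightarrow> i \<in> {1..n} \<and> 0 < j \<and> j \<le> off es q i (Suc p)"
    unfolding Suc mem_newE using m by auto
  finally show ?case .
qed

lemma union_newE:
  "(\<Union>t<p. newE es q n t) = {(j,i) | j i. i \<in> {1..n} \<and> 0 < j \<and> j \<le> off es q i p}"
  by (rule set_eqI, case_tac x, simp only: mem_union_newE, simp)

lemma newE_cls:
  assumes "i \<in> {1..n}" "off es q i (Suc t) \<le> q"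
  shows "newE es q n t \<inter> cls q i = (\<lambda>j. (j,i)) ` {off es q i t<..off es q i (Suc t)}"
  using assms unfolding newE_def cls_def by auto

lemma card_newE_cls:
  assumes "i \<in> {1..n}" "off es q i (Suc t) \<le> q"
  shows "card (newE es q n t \<inter> cls q i) = card (es!t \<inter> cls q i)"
  using assms by (simp add: newE_cls card_image inj_on_def off_Suc)

lemma card_sum_cls:
  assumes "K \<subseteq> verts n q"
  shows "card K = (\<Sum>i\<in>{1..n}. card (K \<inter> cls q i))"
proof -
  have K: "K = (\<Union>i\<in>{1..n}. K \<inter> cls q i)" using assms unfolding verts_def by auto
  have "card (\<Union>i\<in>{1..n}. K \<inter> cls q i) = (\<Sum>i\<in>{1..n}. card (K \<inter> cls q i))"
    by (rule card_UN_disjoint) (auto simp: finite_cls cls_def)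
  then show ?thesis using K by simp
qed

theorem lemma3p1:
  fixes n r q :: nat and \<sigma> :: "nat multiset" and M :: "(nat \<times> nat) set set"
  assumes "is_partition \<sigma> r"
    and "is_max_matching n r q \<sigma> M"
  shows "\<exists>Mc. is_matching n r q \<sigma> Mc \<and> card Mc = card M \<and>
     (\<forall>E\<in>Mc. \<forall>i\<in>{1..n}. E \<inter> cls q i \<noteq> {} \<longrightarrow> consecutive q i (E \<inter> cls q i)) \<and>
     (\<forall>i\<in>{1..n}. \<exists>k. k \<le> q \<and>
        (cls q i - \<Union>Mc = top_k q i k \<or> cls q i - \<Union>Mc = bottom_k q i k) \<and>
        (cls q i - \<Union>Mc \<noteq> {} \<longrightarrow> consecutive q i (cls q i - \<Union>Mc)))"
proof -
  have mat: "is_matching n r q \<sigma> M" using assms(2) unfolding is_max_matching_def by auto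
  have edges: "\<And>E. E \<in> M \<Longrightarrow> sigma_edge n r q \<sigma> E" using mat unfolding is_matching_def by auto
  have disj: "\<forall>E\<in>M. \<forall>F\<in>M. E \<noteq> F \<longrightarrow> E \<inter> F = {}" using mat unfolding is_matching_def by auto
  have "M \<subseteq> Pow (verts n q)" using edges unfolding sigma_edge_def by auto
  then have "finite M" using finite_verts by (meson finite_Pow_iff finite_subset)
  then obtain es where es: "set es = M" "distinct es" using finite_distinct_list by blast
  define m where "m = length es"
  have offq: "\<And>i t. t \<le> m \<Longrightarrow> off es q i t \<le> q"
    using off_le_q[OF es(2)] disj es(1) off_mono unfolding m_def by (metis le_trans)
  have esM: "\<And>t. t < m \<Longrightarrow> es!t \<in> M" using es(1) m_def by auto
  define N where "N = newE es q n"
  define Mc where "Mc = N ` {..<m}"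
  have Nsub: "\<And>t. t < m \<Longrightarrow> N t \<subseteq> verts n q"
  proof
    fix t x assume t: "t < m" and x: "x \<in> N t"
    then obtain j i where "x = (j,i)" "i \<in> {1..n}" "off es q i t < j" "j \<le> off es q i (Suc t)"
      unfolding N_def newE_def by auto
    moreover have "off es q i (Suc t) \<le> q" using offq t by auto
    ultimately show "x \<in> verts n q" unfolding verts_def cls_def by auto
  qed
  have Ncard: "\<And>t i. t < m \<Longrightarrow> i \<in> {1..n} \<Longrightarrow> card (N t \<inter> cls q i) = card (es!t \<inter> cls q i)"
    unfolding N_def using card_newE_cls offq by auto
  have Nedge: "\<And>t. t < m \<Longrightarrow> sigma_edge n r q \<sigma> (N t)"
  proof -
    fix t assume t: "t < m"
    have e: "sigma_edge n r q \<sigma> (es!t)" using edges esM t by auto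
    have sub: "es!t \<subseteq> verts n q" using e unfolding sigma_edge_def by auto
    have "card (N t) = (\<Sum>i\<in>{1..n}. card (N t \<inter> cls q i))" using card_sum_cls Nsub t by auto
    also have "\<dots> = (\<Sum>i\<in>{1..n}. card (es!t \<inter> cls q i))" using Ncard t by auto
    also have "\<dots> = card (es!t)" using card_sum_cls sub by auto
    finally have c: "card (N t) = r" using e unfolding sigma_edge_def by auto
    have "image_mset (\<lambda>i. card (N t \<inter> cls q i)) (mset_set {1..n})
        = image_mset (\<lambda>i. card (es!t \<inter> cls q i)) (mset_set {1..n})"
      by (rule image_mset_cong) (use Ncard t in auto)
    then show "sigma_edge n r q \<sigma> (N t)" using e c Nsub t unfolding sigma_edge_def by auto
  qed
  have Ndisj: "\<And>t t'. t < t' \<Longrightarrow> N t \<inter> N t' = {}"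
  proof -
    fix t t' :: nat assume "t < t'"
    then have "\<And>i. off es q i (Suc t) \<le> off es q i t'" using off_mono by auto
    then show "N t \<inter> N t' = {}" unfolding N_def newE_def
      by (auto, metis (no_types) le_less_trans not_le)
  qed
  have Ndisj2: "\<And>t t'. t \<noteq> t' \<Longrightarrow> N t \<inter> N t' = {}"
    by (metis Ndisj inf_commute linorder_neqE_nat)
  have inj: "inj_on N {..<m}"
  proof (rule inj_onI)
    fix t t' assume t: "t \<in> {..<m}" and t': "t' \<in> {..<m}" and eq: "N t = N t'"
    show "t = t'"
    proof (rule ccontr)
      assume ne: "t \<noteq> t'"
      then have "N t = {}" using Ndisj2 eq by auto
      moreover have "card (N t) = r" using Nedge[of t] t unfolding sigma_edge_def by auto
      ultimately have "r = 0" by simp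
      have "\<And>u. u < m \<Longrightarrow> es!u = {}"
      proof -
        fix u assume u: "u < m"
        have "sigma_edge n r q \<sigma> (es!u)" using edges esM u by auto
        then have "es!u \<subseteq> verts n q" "card (es!u) = 0" using \<open>r = 0\<close> unfolding sigma_edge_def by auto
        then show "es!u = {}" using finite_verts by (meson card_0_eq finite_subset)
      qed
      then have "es!t = es!t'" using t t' by auto
      then show False using ne es(2) t t' nth_eq_iff_index_eq unfolding m_def by auto
    qed
  qed
  have cardMc: "card Mc = card M"
    unfolding Mc_def using card_image[OF inj] es distinct_card[of es] m_def by simp
  have matc: "is_matching n r q \<sigma> Mc"
    unfolding is_matching_def
  proof (intro conjI ballI impI)
    fix E assume "E \<in> Mc" then show "sigma_edge n r q \<sigma> E" unfolding Mc_def using Nedge by auto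
  next
    fix E F assume "E \<in> Mc" "F \<in> Mc" "E \<noteq> F"
    then obtain t t' where EF: "E = N t" "F = N t'" unfolding Mc_def by auto
    then show "E \<inter> F = {}" using Ndisj2[of t t'] \<open>E \<noteq> F\<close> by (cases "t = t'") auto
  qed
  have cons: "\<forall>E\<in>Mc. \<forall>i\<in>{1..n}. E \<inter> cls q i \<noteq> {} \<longrightarrow> consecutive q i (E \<inter> cls q i)"
  proof (intro ballI impI)
    fix E i assume E: "E \<in> Mc" and i: "i \<in> {1..n}" and ne: "E \<inter> cls q i \<noteq> {}"
    then obtain t where t: "t < m" "E = N t" unfolding Mc_def by auto
    define a where "a = off es q i t"
    define b where "b = off es q i (Suc t)"
    have bq: "b \<le> q" using offq t b_def by auto
    have eq: "E \<inter> cls q i = (\<lambda>j. (j,i)) ` {a<..b}"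
      using newE_cls[OF i, of es q t] bq t unfolding N_def a_def b_def by auto
    then have ab: "a < b" using ne by auto
    show "consecutive q i (E \<inter> cls q i)"
      unfolding consecutive_def eq
      by (rule exI[of _ "Suc a"], rule exI[of _ "b - Suc a"]) (use ab bq in auto)
  qed
  have unc: "\<forall>i\<in>{1..n}. \<exists>k. k \<le> q \<and>
        (cls q i - \<Union>Mc = top_k q i k \<or> cls q i - \<Union>Mc = bottom_k q i k) \<and>
        (cls q i - \<Union>Mc \<noteq> {} \<longrightarrow> consecutive q i (cls q i - \<Union>Mc))"
  proof
    fix i assume i: "i \<in> {1..n}"
    define S where "S = off es q i m"
    have Sq: "S \<le> q" using offq S_def by auto
    have U: "\<Union>Mc = {(j,i) | j i. i \<in> {1..n} \<and> 0 < j \<and> j \<le> off es q i m}"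
      unfolding Mc_def N_def using union_newE by auto
    have D: "cls q i - \<Union>Mc = {(j,i) | j. S < j \<and> j \<le> q}"
      unfolding U cls_def S_def using i by (rule_tac set_eqI, clarify, auto)
    show "\<exists>k. k \<le> q \<and>
        (cls q i - \<Union>Mc = top_k q i k \<or> cls q i - \<Union>Mc = bottom_k q i k) \<and>
        (cls q i - \<Union>Mc \<noteq> {} \<longrightarrow> consecutive q i (cls q i - \<Union>Mc))"
    proof (rule exI[of _ "q - S"], intro conjI impI)
      show "q - S \<le> q" by simp
      show "cls q i - \<Union>Mc = top_k q i (q - S) \<or> cls q i - \<Union>Mc = bottom_k q i (q - S)"
        unfolding D bottom_k_def using Sq by auto
      assume "cls q i - \<Union>Mc \<noteq> {}"
      then have "S < q" unfolding D by auto
      then show "consecutive q i (cls q i - \<Union>Mc)"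
        unfolding consecutive_def D
        by (intro exI[of _ "Suc S"] exI[of _ "q - Suc S"]) auto
    qed
  qed
  show ?thesis using matc cardMc cons unc by blast
qed

end
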